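(* Let $n$ be a positive integer and let $x,y,z$ be complex numbers with $x+y+z=1$. (i) If $r,s,t$ are complex numbers with $r+s+t=n-1$, then $$\sum_{k=0}^n(-1)^k\binom rk\binom s{n-k}B_k(x)E_{n-k}(z)-(-1)^n\sum_{k=0}^n(-1)^k\binom rk\binom t{n-k}B_k(y)E_{n-k}(z)=\frac r2\sum_{l=0}^{n-1}(-1)^l\binom sl\binom t{n-1-l}E_l(y)E_{n-1-l}(x).$$ (ii) If $r,s,t$ are complex numbers with $r+s+t=n$, then $$r\,M_n(s,t;x,y)+s\,M_n(t,r;y,z)+t\,M_n(r,s;z,x)=0,$$ where for complex $a,b,u,v$ we set $$M_n(a,b;u,v):=\sum_{k=0}^n(-1)^k\binom ak\binom b{n-k}B_{n-k}(u)B_k(v).$$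
   Context: Bernoulli numbers are defined by $B_0=1$ and $\sum_{k=0}^n\binom{n+1}kB_k=0$ for $n\ge1$; Euler numbers by $E_0=1$ and $\sum_{0\le k\le n,\,2\mid n-k}\binom nkE_k=0$ for $n\ge1$. The Bernoulli polynomials are $B_n(x)=\sum_{k=0}^n\binom nkB_kx^{n-k}$ and the Euler polynomials are $E_n(x)=\sum_{k=0}^n\binom nk\frac{E_k}{2^k}(x-\frac12)^{n-k}$. For complex $z$ and integer $k\ge0$, $\binom zk=z(z-1)\cdots(z-k+1)/k!$ (with $\binom z0=1$), and $\binom zk=0$ for negative integers $k$. *)

theory Defs
  imports Complex_Main
begin

function bern :: "nat \<Rightarrow> complex" where
  "bern n = (if n = 0 then 1
             else - (\<Sum>k<n. of_nat (Suc n choose k) * bern k) / of_nat (Suc n))"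
  by auto
termination by (relation "measure id") auto

function eul :: "nat \<Rightarrow> complex" where
  "eul n = (if n = 0 then 1
            else - (\<Sum>k\<in>{k. k < n \<and> even (n - k)}. of_nat (n choose k) * eul k))"
  by auto
termination by (relation "measure id") auto

definition bern_poly :: "nat \<Rightarrow> complex \<Rightarrow> complex" where
  "bern_poly n x = (\<Sum>k\<le>n. of_nat (n choose k) * bern k * x ^ (n - k))"

definition eul_poly :: "nat \<Rightarrow> complex \<Rightarrow> complex" where
  "eul_poly n x = (\<Sum>k\<le>n. of_nat (n choose k) * (eul k / 2 ^ k) * (x - 1/2) ^ (n - k))"

definition M_sum :: "nat \<Rightarrow> complex \<Rightarrow> complex \<Rightarrow> complex \<Rightarrow> complex \<Rightarrow> complex" where
  "M_sum n a b u v = (\<Sum>k\<le>n. (-1) ^ k * (a gchoose k) * (b gchoose (n - k))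
                         * bern_poly (n - k) u * bern_poly k v)"

end

theory Submission
  imports Defs "HOL-Complex_Analysis.Contour_Integration"
begin


declare bern.simps[simp del] eul.simps[simp del]

lemma bern0: "bern 0 = 1" by (simp add: bern.simps[of 0])
lemma bern1: "bern 1 = - 1/2"
  by (subst bern.simps) (simp add: bern0)
lemma bern1': "bern (Suc 0) = - 1/2" using bern1 by simp

lemma bern_rec: "n > 0 \<Longrightarrow> (\<Sum>k\<le>n. of_nat (Suc n choose k) * bern k) = 0"
proof -
  assume "n > 0"
  have "bern n = - (\<Sum>k<n. of_nat (Suc n choose k) * bern k) / of_nat (Suc n)"
    using \<open>n > 0\<close> by (simp add: bern.simps[of n])
  hence "of_nat (Suc n) * bern n = - (\<Sum>k<n. of_nat (Suc n choose k) * bern k)"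
    by (simp add: field_simps del: of_nat_Suc)
  moreover have "of_nat (Suc n choose n) = (of_nat (Suc n) :: complex)" by simp
  ultimately show ?thesis by (simp add: lessThan_Suc_atMost[symmetric] del: of_nat_Suc)
qed

lemma bern_poly_at0: "bern_poly m 0 = bern m"
proof (cases m)
  case 0 then show ?thesis by (simp add: bern_poly_def)
next
  case (Suc m')
  have "(\<Sum>k\<le>m'. of_nat (Suc m' choose k) * bern k * (0::complex) ^ (Suc m' - k)) = 0"
    by (rule sum.neutral) auto
  then show ?thesis using Suc by (simp add: bern_poly_def)
qed

lemma bern_poly_at1: "bern_poly m 1 = bern m + (if m = 1 then 1 else 0)"
proof (cases m)
  case 0 then show ?thesis by (simp add: bern_poly_def)
next
  case (Suc m')
  show ?thesis
  proof (cases m')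
    case 0 then show ?thesis using Suc by (simp add: bern_poly_def bern0)
  next
    case (Suc m'')
    have "(\<Sum>k\<le>m'. of_nat (Suc m' choose k) * bern k) = 0"
      using bern_rec[of m'] Suc by simp
    then show ?thesis using \<open>m = Suc m'\<close> Suc by (simp add: bern_poly_def)
  qed
qed

lemma bern_poly_0: "bern_poly 0 x = 1" by (simp add: bern_poly_def bern0)
lemma bern_poly_1: "bern_poly 1 x = x - 1/2" by (simp add: bern_poly_def bern0 bern1')
lemma eul0: "eul 0 = 1" by (simp add: eul.simps[of 0])
lemma eul_poly_0: "eul_poly 0 x = 1" by (simp add: eul_poly_def eul0)

lemma eul_odd: "odd n \<Longrightarrow> eul n = 0"
proof (induction n rule: less_induct)
  case (less n)
  then have "n > 0" by (cases n) auto
  have "(\<Sum>k\<in>{k. k < n \<and> even (n - k)}. of_nat (n choose k) * eul k) = 0"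
  proof (rule sum.neutral, safe)
    fix k assume "k < n" "even (n - k)"
    then have "odd k" using less.prems by (metis dvd_diff_nat even_add le_add_diff_inverse less_or_eq_imp_le)
    then show "of_nat (n choose k) * eul k = 0" using less.IH \<open>k < n\<close> by simp
  qed
  then show ?case using \<open>n > 0\<close> by (simp add: eul.simps[of n])
qed

lemma eul_poly_1: "eul_poly 1 x = x - 1/2"
proof -
  have "eul 1 = 0" by (rule eul_odd) simp
  then show ?thesis by (simp add: eul_poly_def eul0)
qed

lemma eul_rec: "n > 0 \<Longrightarrow> (\<Sum>k\<in>{k. k \<le> n \<and> even (n - k)}. of_nat (n choose k) * eul k) = 0"
proof -
  assume "n > 0"
  have "{k. k \<le> n \<and> even (n - k)} = insert n {k. k < n \<and> even (n - k)}" by auto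
  moreover have "finite {k. k < n \<and> even (n - k)}" by simp
  ultimately show ?thesis using \<open>n > 0\<close> by (simp add: eul.simps[of n])
qed

lemma eul_poly_at1: "eul_poly m 1 = (\<Sum>k\<le>m. of_nat (m choose k) * eul k) / 2 ^ m"
proof -
  have "eul_poly m 1 = (\<Sum>k\<le>m. of_nat (m choose k) * eul k / 2 ^ m)"
    unfolding eul_poly_def
  proof (rule sum.cong)
    fix k assume "k \<in> {..m}"
    hence "k \<le> m" by simp
    hence "(2::complex) ^ k * 2 ^ (m - k) = 2 ^ m" by (simp add: power_add[symmetric])
    thus "of_nat (m choose k) * (eul k / 2 ^ k) * (1 - 1 / 2) ^ (m - k) = of_nat (m choose k) * eul k / 2 ^ m"
      by (simp add: field_simps power_divide)
  qed simp
  thus ?thesis by (simp add: sum_divide_distrib)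
qed

lemma eul_poly_at0: "eul_poly m 0 = (-1)^m * eul_poly m 1"
proof -
  have "eul_poly m 0 = (\<Sum>k\<le>m. (-1)^m * (of_nat (m choose k) * eul k / 2 ^ m))"
    unfolding eul_poly_def
  proof (rule sum.cong)
    fix k assume "k \<in> {..m}"
    hence km: "k \<le> m" by simp
    hence 1: "(2::complex) ^ k * 2 ^ (m - k) = 2 ^ m" by (simp add: power_add[symmetric])
    show "of_nat (m choose k) * (eul k / 2 ^ k) * (0 - 1 / 2) ^ (m - k) = (-1)^m * (of_nat (m choose k) * eul k / 2 ^ m)"
    proof (cases "even k")
      case True
      then have "(-1::complex)^(m-k) = (-1)^m" using km
        by (metis (no_types, lifting) add_diff_cancel_left' even_add le_add_diff_inverse neg_one_even_power neg_one_odd_power power_add)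
      then show ?thesis using 1
        by (simp add: field_simps power_divide power_minus[of "1/2"])
    next
      case False then have "eul k = 0" by (simp add: eul_odd)
        then show ?thesis by simp
    qed
  qed simp
  thus ?thesis by (simp add: eul_poly_at1 sum_distrib_left sum_divide_distrib)
qed

lemma eul_poly_sum01: "eul_poly m 1 + eul_poly m 0 = (if m = 0 then 2 else 0)"
proof (cases "m = 0")
  case True then show ?thesis by (simp add: eul_poly_0)
next
  case False
  have "eul_poly m 1 + eul_poly m 0 = (\<Sum>k\<le>m. of_nat (m choose k) * eul k * (1 + (-1)^(m-k))) / 2^m"
  proof -
    have "eul_poly m 0 = (\<Sum>k\<le>m. of_nat (m choose k) * eul k * (-1)^(m-k)) / 2^m"
    proof -
      have "eul_poly m 0 = (\<Sum>k\<le>m. (-1)^m * (of_nat (m choose k) * eul k)) / 2^m"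
        by (simp add: eul_poly_at0 eul_poly_at1 sum_distrib_left)
      also have "\<dots> = (\<Sum>k\<le>m. of_nat (m choose k) * eul k * (-1)^(m-k)) / 2^m"
      proof (rule arg_cong[where f="\<lambda>u. u / 2^m"], rule sum.cong)
        fix k assume "k \<in> {..m}"
        hence km: "k \<le> m" by simp
        show "(-1)^m * (of_nat (m choose k) * eul k) = of_nat (m choose k) * eul k * (-1)^(m-k)"
        proof (cases "even k")
          case True
          then have "(-1::complex)^(m-k) = (-1)^m" using km
            by (metis (no_types, lifting) add_diff_cancel_left' even_add le_add_diff_inverse neg_one_even_power neg_one_odd_power power_add)
          then show ?thesis by simp
        next
          case False then have "eul k = 0" by (simp add: eul_odd)
        then show ?thesis by simp
        qed
      qed simp
      finally show ?thesis .
    qed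
    then show ?thesis by (simp add: eul_poly_at1 add_divide_distrib[symmetric] sum.distrib[symmetric] algebra_simps)
  qed
  also have "(\<Sum>k\<le>m. of_nat (m choose k) * eul k * (1 + (-1)^(m-k)))
      = (\<Sum>k\<le>m. if even (m - k) then 2 * (of_nat (m choose k) * eul k) else 0)"
    by (rule sum.cong) auto
  also have "\<dots> = (\<Sum>k\<in>{k \<in> {..m}. even (m - k)}. 2 * (of_nat (m choose k) * eul k))"
    by (rule sum.inter_filter[symmetric]) simp
  also have "{k \<in> {..m}. even (m - k)} = {k. k \<le> m \<and> even (m - k)}" by auto
  also have "(\<Sum>k\<in>{k. k \<le> m \<and> even (m - k)}. 2 * (of_nat (m choose k) * eul k))
     = 2 * (\<Sum>k\<in>{k. k \<le> m \<and> even (m - k)}. of_nat (m choose k) * eul k)"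
    by (simp only: sum_distrib_left)
  also have "\<dots> = 0" using eul_rec[of m] False by simp
  finally show ?thesis using False by simp
qed

lemma eul_poly_even0: "m > 0 \<Longrightarrow> even m \<Longrightarrow> eul_poly m 0 = 0"
  using eul_poly_sum01[of m] eul_poly_at0[of m] by simp


definition Ap :: "(nat \<Rightarrow> complex) \<Rightarrow> complex \<Rightarrow> nat \<Rightarrow> complex \<Rightarrow> complex" where
  "Ap e c n x = (\<Sum>k\<le>n. of_nat (n choose k) * e k * (x - c) ^ (n - k))"

lemma Ap_deriv: "(Ap e c n has_field_derivative of_nat n * Ap e c (n-1) x) (at x)"
proof (cases n)
  case 0
  have "Ap e c 0 = (\<lambda>x. e 0)" by (auto simp: Ap_def fun_eq_iff)
  then show ?thesis using 0 by simp
next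
  case (Suc m)
  have d: "((\<lambda>x. \<Sum>k\<le>Suc m. of_nat (Suc m choose k) * e k * (x - c)^(Suc m - k)) has_field_derivative
     (\<Sum>k\<le>Suc m. of_nat (Suc m choose k) * e k * (of_nat (Suc m - k) * (x-c)^(Suc m - k - 1)))) (at x)"
  proof (rule DERIV_sum)
    fix k
    have p: "((\<lambda>x. (x - c)^(Suc m - k)) has_field_derivative of_nat (Suc m - k) * (1 * (x - c)^(Suc m - k - Suc 0))) (at x)"
      by (rule DERIV_power) (rule DERIV_diff[OF DERIV_ident DERIV_const, simplified])
    show "((\<lambda>x. of_nat (Suc m choose k) * e k * (x - c)^(Suc m - k)) has_field_derivative
        of_nat (Suc m choose k) * e k * (of_nat (Suc m - k) * (x-c)^(Suc m - k - 1))) (at x)"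
      using DERIV_cmult[OF p, of "of_nat (Suc m choose k) * e k"] by simp
  qed
  have "(\<Sum>k\<le>Suc m. of_nat (Suc m choose k) * e k * (of_nat (Suc m - k) * (x-c)^(Suc m - k - 1)))
      = (\<Sum>k\<le>m. of_nat (Suc m choose k) * e k * (of_nat (Suc m - k) * (x-c)^(Suc m - k - 1)))"
    by (simp add: sum.atMost_Suc)
  also have "\<dots> = (\<Sum>k\<le>m. of_nat (Suc m) * (of_nat (m choose k) * e k * (x - c)^(m - k)))"
  proof (rule sum.cong)
    fix k assume "k \<in> {..m}"
    hence km: "k \<le> m" by simp
    have "(Suc m - k) * (Suc m choose k) = Suc m * (m choose k)"
      using binomial_absorb_comp[of "Suc m" k] by simp
    hence "(of_nat (Suc m - k) :: complex) * of_nat (Suc m choose k) = of_nat (Suc m) * of_nat (m choose k)"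
      by (metis of_nat_mult)
    moreover have "Suc m - k - 1 = m - k" using km by simp
    ultimately show "of_nat (Suc m choose k) * e k * (of_nat (Suc m - k) * (x-c)^(Suc m - k - 1))
       = of_nat (Suc m) * (of_nat (m choose k) * e k * (x - c)^(m - k))"
      by (simp only: mult.assoc[symmetric]) (simp only: mult_ac)
  qed simp
  also have "\<dots> = of_nat (Suc m) * Ap e c m x" by (simp only: Ap_def sum_distrib_left)
  finally have calc: "(\<Sum>k\<le>Suc m. of_nat (Suc m choose k) * e k * (of_nat (Suc m - k) * (x-c)^(Suc m - k - 1)))
     = of_nat (Suc m) * Ap e c m x" .
  have eqA: "Ap e c (Suc m) = (\<lambda>x. \<Sum>k\<le>Suc m. of_nat (Suc m choose k) * e k * (x - c)^(Suc m - k))"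
    by (rule ext) (simp only: Ap_def)
  show ?thesis using d[unfolded calc] by (simp only: Suc eqA diff_Suc_1)
qed

lemma bern_poly_Ap: "bern_poly = Ap bern 0"
  by (auto simp: fun_eq_iff bern_poly_def Ap_def)

lemma eul_poly_Ap: "eul_poly = Ap (\<lambda>k. eul k / 2 ^ k) (1/2)"
  by (auto simp: fun_eq_iff eul_poly_def Ap_def)

lemma bern_poly_deriv: "(bern_poly n has_field_derivative of_nat n * bern_poly (n-1) x) (at x)"
  unfolding bern_poly_Ap by (rule Ap_deriv)
lemma eul_poly_deriv: "(eul_poly n has_field_derivative of_nat n * eul_poly (n-1) x) (at x)"
  unfolding eul_poly_Ap by (rule Ap_deriv)

definition Gs :: "nat \<Rightarrow> complex \<Rightarrow> complex \<Rightarrow> (nat \<Rightarrow> complex) \<Rightarrow> (nat \<Rightarrow> complex) \<Rightarrow> complex" where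
  "Gs n a b F H = (\<Sum>k\<le>n. (-1)^k * (a gchoose k) * (b gchoose (n-k)) * F k * H (n-k))"

lemma Gs_ident: "a * Gs m (a-1) b F H + b * Gs m a (b-1) F H = (a + b - of_nat m) * Gs m a b F H"
proof -
  have "a * Gs m (a-1) b F H + b * Gs m a (b-1) F H =
    (\<Sum>k\<le>m. (-1)^k * (a * ((a-1) gchoose k)) * (b gchoose (m-k)) * F k * H (m-k)
          + (-1)^k * (a gchoose k) * (b * ((b-1) gchoose (m-k))) * F k * H (m-k))"
    by (simp add: Gs_def sum_distrib_left sum.distrib algebra_simps)
  also have "\<dots> = (\<Sum>k\<le>m. (a + b - of_nat m) * ((-1)^k * (a gchoose k) * (b gchoose (m-k)) * F k * H (m-k)))"
  proof (rule sum.cong)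
    fix k assume "k \<in> {..m}"
    hence km: "k \<le> m" by simp
    have 1: "a * ((a-1) gchoose k) = (a - of_nat k) * (a gchoose k)"
      by (simp add: gbinomial_absorb_comp)
    have 2: "b * ((b-1) gchoose (m-k)) = (b - of_nat (m-k)) * (b gchoose (m-k))"
      by (simp add: gbinomial_absorb_comp)
    have 3: "(of_nat (m-k) :: complex) = of_nat m - of_nat k" using km by (simp add: of_nat_diff)
    show "(-1)^k * (a * ((a-1) gchoose k)) * (b gchoose (m-k)) * F k * H (m-k)
          + (-1)^k * (a gchoose k) * (b * ((b-1) gchoose (m-k))) * F k * H (m-k)
        = (a + b - of_nat m) * ((-1)^k * (a gchoose k) * (b gchoose (m-k)) * F k * H (m-k))"
      unfolding 1 2 3 by (simp add: algebra_simps)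
  qed simp
  also have "\<dots> = (a + b - of_nat m) * Gs m a b F H" by (simp add: Gs_def sum_distrib_left)
  finally show ?thesis .
qed

lemma Gs_L1: "(\<Sum>k\<le>Suc m. (-1)^k * (a gchoose k) * (b gchoose (Suc m - k)) * (of_nat k * F (k-1)) * H (Suc m - k))
   = - a * Gs m (a-1) b F H"
proof -
  have "(\<Sum>k\<le>Suc m. (-1)^k * (a gchoose k) * (b gchoose (Suc m - k)) * (of_nat k * F (k-1)) * H (Suc m - k))
     = (\<Sum>k\<le>m. (-1)^(Suc k) * (a gchoose (Suc k)) * (b gchoose (Suc m - Suc k)) * (of_nat (Suc k) * F k) * H (Suc m - Suc k))"
    by (subst sum.atMost_Suc_shift) simp
  also have "\<dots> = (\<Sum>k\<le>m. - a * ((-1)^k * ((a-1) gchoose k) * (b gchoose (m-k)) * F k * H (m-k)))"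
  proof (rule sum.cong)
    fix k assume "k \<in> {..m}"
    have 1: "of_nat (Suc k) * (a gchoose Suc k) = a * ((a - 1) gchoose k)" by (rule gbinomial_absorption)
    show "(-1)^(Suc k) * (a gchoose (Suc k)) * (b gchoose (Suc m - Suc k)) * (of_nat (Suc k) * F k) * H (Suc m - Suc k)
       = - a * ((-1)^k * ((a-1) gchoose k) * (b gchoose (m-k)) * F k * H (m-k))"
      using 1 by (simp del: of_nat_Suc add: algebra_simps)
  qed simp
  also have "\<dots> = - a * Gs m (a-1) b F H" by (simp add: Gs_def sum_distrib_left)
  finally show ?thesis .
qed

lemma Gs_L2: "(\<Sum>k\<le>Suc m. (-1)^k * (a gchoose k) * (b gchoose (Suc m - k)) * F k * (of_nat (Suc m - k) * H (Suc m - k - 1)))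
   = b * Gs m a (b-1) F H"
proof -
  have "(\<Sum>k\<le>Suc m. (-1)^k * (a gchoose k) * (b gchoose (Suc m - k)) * F k * (of_nat (Suc m - k) * H (Suc m - k - 1)))
     = (\<Sum>k\<le>m. (-1)^k * (a gchoose k) * (b gchoose (Suc m - k)) * F k * (of_nat (Suc m - k) * H (Suc m - k - 1)))"
    by (simp add: sum.atMost_Suc)
  also have "\<dots> = (\<Sum>k\<le>m. b * ((-1)^k * (a gchoose k) * ((b-1) gchoose (m-k)) * F k * H (m-k)))"
  proof (rule sum.cong)
    fix k assume "k \<in> {..m}"
    hence km: "k \<le> m" by simp
    have e: "Suc m - k = Suc (m - k)" using km by simp
    have 1: "of_nat (Suc (m-k)) * (b gchoose Suc (m-k)) = b * ((b - 1) gchoose (m-k))" by (rule gbinomial_absorption)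
    show "(-1)^k * (a gchoose k) * (b gchoose (Suc m - k)) * F k * (of_nat (Suc m - k) * H (Suc m - k - 1))
       = b * ((-1)^k * (a gchoose k) * ((b-1) gchoose (m-k)) * F k * H (m-k))"
      unfolding e using 1 by (simp del: of_nat_Suc add: algebra_simps)
  qed simp
  also have "\<dots> = b * Gs m a (b-1) F H" by (simp add: Gs_def sum_distrib_left)
  finally show ?thesis .
qed

lemma Gs_deriv:
  fixes m :: nat and a b f' g' x :: complex and P Q :: "nat \<Rightarrow> complex \<Rightarrow> complex" and f g :: "complex \<Rightarrow> complex"
  assumes P: "\<And>k v. (P k has_field_derivative of_nat k * P (k-1) v) (at v)"
    and Q: "\<And>k v. (Q k has_field_derivative of_nat k * Q (k-1) v) (at v)"
    and f: "(f has_field_derivative f') (at x)" and g: "(g has_field_derivative g') (at x)"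
  shows "((\<lambda>x. Gs (Suc m) a b (\<lambda>k. P k (g x)) (\<lambda>j. Q j (f x))) has_field_derivative
     (b * Gs m a (b-1) (\<lambda>k. P k (g x)) (\<lambda>j. Q j (f x)) * f'
      - a * Gs m (a-1) b (\<lambda>k. P k (g x)) (\<lambda>j. Q j (f x)) * g')) (at x)"
proof -
  let ?n = "Suc m"
  let ?c = "\<lambda>k. (-1)^k * (a gchoose k) * (b gchoose (?n-k))"
  have each: "((\<lambda>x. ?c k * P k (g x) * Q (?n-k) (f x)) has_field_derivative
      ?c k * (of_nat k * P (k-1) (g x) * g') * Q (?n-k) (f x)
      + ?c k * P k (g x) * (of_nat (?n-k) * Q (?n-k-1) (f x) * f')) (at x)" for k
  proof -
    have 1: "((\<lambda>x. P k (g x)) has_field_derivative (of_nat k * P (k-1) (g x) * g')) (at x)"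
      by (rule DERIV_chain2[OF P g])
    have 2: "((\<lambda>x. Q (?n-k) (f x)) has_field_derivative (of_nat (?n-k) * Q (?n-k-1) (f x) * f')) (at x)"
      by (rule DERIV_chain2[OF Q f])
    show ?thesis
      using DERIV_mult[OF DERIV_cmult[OF 1, of "?c k"] 2] by (simp add: algebra_simps)
  qed
  have "((\<lambda>x. \<Sum>k\<le>?n. ?c k * P k (g x) * Q (?n-k) (f x)) has_field_derivative
      (\<Sum>k\<le>?n. ?c k * (of_nat k * P (k-1) (g x) * g') * Q (?n-k) (f x)
      + ?c k * P k (g x) * (of_nat (?n-k) * Q (?n-k-1) (f x) * f'))) (at x)"
    by (rule DERIV_sum) (rule each)
  also have "(\<Sum>k\<le>?n. ?c k * (of_nat k * P (k-1) (g x) * g') * Q (?n-k) (f x)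
      + ?c k * P k (g x) * (of_nat (?n-k) * Q (?n-k-1) (f x) * f'))
    = g' * (\<Sum>k\<le>?n. ?c k * (of_nat k * P (k-1) (g x)) * Q (?n-k) (f x))
      + f' * (\<Sum>k\<le>?n. ?c k * P k (g x) * (of_nat (?n-k) * Q (?n-k-1) (f x)))"
    unfolding sum_distrib_left sum.distrib[symmetric]
    by (rule sum.cong[OF refl]) (simp only: mult_ac)
  also have "\<dots> = b * Gs m a (b-1) (\<lambda>k. P k (g x)) (\<lambda>j. Q j (f x)) * f'
      - a * Gs m (a-1) b (\<lambda>k. P k (g x)) (\<lambda>j. Q j (f x)) * g'"
    unfolding Gs_L1[where m=m and a=a and b=b and F="\<lambda>k. P k (g x)" and H="\<lambda>j. Q j (f x)"]
          Gs_L2[where m=m and a=a and b=b and F="\<lambda>k. P k (g x)" and H="\<lambda>j. Q j (f x)"]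
    by (simp add: algebra_simps)
  finally have D: "((\<lambda>x. \<Sum>k\<le>?n. ?c k * P k (g x) * Q (?n-k) (f x)) has_field_derivative
     (b * Gs m a (b-1) (\<lambda>k. P k (g x)) (\<lambda>j. Q j (f x)) * f'
      - a * Gs m (a-1) b (\<lambda>k. P k (g x)) (\<lambda>j. Q j (f x)) * g')) (at x)" .
  have eq: "(\<lambda>x. Gs (Suc m) a b (\<lambda>k. P k (g x)) (\<lambda>j. Q j (f x)))
     = (\<lambda>x. \<Sum>k\<le>?n. ?c k * P k (g x) * Q (?n-k) (f x))"
    unfolding Gs_def ..
  show ?thesis unfolding eq by (rule D)
qed


lemma zero_deriv_const:
  assumes "\<And>x. (f has_field_derivative 0) (at x)"
  shows "f x = f (y::complex)"
proof -
  obtain c where "\<forall>x\<in>UNIV. f x = c"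
    using has_field_derivative_zero_constant[of UNIV f] assms by auto
  then show ?thesis by simp
qed

lemma bern_refl: "(-1)^n * bern_poly n (1 - x) = bern_poly n x"
proof -
  define D where "D n x = (-1)^n * bern_poly n (1 - x) - bern_poly n x" for n x
  have dD: "(D (Suc m) has_field_derivative of_nat (Suc m) * D m x) (at x)" for m x
  proof -
    have 1: "((\<lambda>x. bern_poly (Suc m) (1 - x)) has_field_derivative (of_nat (Suc m) * bern_poly m (1 - x) * (-1))) (at x)"
      using DERIV_chain2[OF bern_poly_deriv[of "Suc m"] DERIV_diff[OF DERIV_const DERIV_ident, of 1 x]] by simp
    have "((\<lambda>x. (-1)^(Suc m) * bern_poly (Suc m) (1 - x) - bern_poly (Suc m) x) has_field_derivative
        (-1)^(Suc m) * (of_nat (Suc m) * bern_poly m (1 - x) * (-1)) - of_nat (Suc m) * bern_poly m x) (at x)"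
      by (rule DERIV_diff[OF DERIV_cmult[OF 1]]) (use bern_poly_deriv[of "Suc m" x] in simp)
    moreover have "(D (Suc m)) = (\<lambda>x. (-1)^(Suc m) * bern_poly (Suc m) (1 - x) - bern_poly (Suc m) x)"
      by (simp add: D_def fun_eq_iff)
    ultimately show ?thesis by (simp add: D_def algebra_simps)
  qed
  have "\<forall>x. D n x = 0"
  proof (induction n)
    case 0 then show ?case by (simp add: D_def bern_poly_0)
  next
    case (Suc m)
    have c1: "D (Suc m) x = D (Suc m) 0" for x
    proof (rule zero_deriv_const[where f="D (Suc m)"])
      fix x show "(D (Suc m) has_field_derivative 0) (at x)" using dD[of m x] Suc.IH by simp
    qed
    define d where "d = D (Suc m) 0"
    have "((\<lambda>x. D (Suc (Suc m)) x - of_nat (Suc (Suc m)) * d * x) has_field_derivative 0) (at x)" for x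
    proof -
      have "((\<lambda>x. D (Suc (Suc m)) x - of_nat (Suc (Suc m)) * d * x) has_field_derivative
          of_nat (Suc (Suc m)) * D (Suc m) x - of_nat (Suc (Suc m)) * d * 1) (at x)"
        by (rule DERIV_diff[OF dD DERIV_cmult[OF DERIV_ident]])
      then show ?thesis using c1[of x] by (simp add: d_def)
    qed
    hence "D (Suc (Suc m)) 1 - of_nat (Suc (Suc m)) * d * 1 = D (Suc (Suc m)) 0 - of_nat (Suc (Suc m)) * d * 0"
      by (rule zero_deriv_const[where f="\<lambda>x. D (Suc (Suc m)) x - of_nat (Suc (Suc m)) * d * x"])
    moreover have "D (Suc (Suc m)) 1 = D (Suc (Suc m)) 0"
      by (simp add: D_def bern_poly_at0 bern_poly_at1)
    ultimately have "d = 0" by (simp del: of_nat_Suc)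
    then show ?case using c1 by (simp add: d_def)
  qed
  then show ?thesis by (simp add: D_def)
qed

lemma bern_odd: "odd n \<Longrightarrow> n \<noteq> 1 \<Longrightarrow> bern n = 0"
  using bern_refl[of n 0] by (simp add: bern_poly_at0 bern_poly_at1)


lemma Gs_0: "Gs 0 a b F H = F 0 * H 0" by (simp add: Gs_def)

lemma sum_only_last: fixes n :: nat shows "(\<And>k. k < n \<Longrightarrow> f k = 0) \<Longrightarrow> (\<Sum>k\<le>n. f k) = (f n :: complex)"
proof -
  assume h: "\<And>k. k < n \<Longrightarrow> f k = 0"
  have e: "{..n} = insert n {..<n}" by auto
  have "(\<Sum>k\<le>n. f k) = f n + (\<Sum>k<n. f k)"
    unfolding e by (rule sum.insert) auto
  also have "(\<Sum>k<n. f k) = 0" by (rule sum.neutral) (use h in auto)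
  finally show ?thesis by simp
qed

lemma sum_only_first: fixes n :: nat shows "(\<And>k. 0 < k \<Longrightarrow> k \<le> n \<Longrightarrow> f k = 0) \<Longrightarrow> (\<Sum>k\<le>n. f k) = (f 0 :: complex)"
proof -
  assume h: "\<And>k. 0 < k \<Longrightarrow> k \<le> n \<Longrightarrow> f k = 0"
  have e: "{..n} = insert 0 {0<..n}" by auto
  have "(\<Sum>k\<le>n. f k) = f 0 + (\<Sum>k\<in>{0<..n}. f k)"
    unfolding e by (rule sum.insert) auto
  also have "(\<Sum>k\<in>{0<..n}. f k) = 0" by (rule sum.neutral) (use h in auto)
  finally show ?thesis by simp
qed

lemma Gs_addH: "Gs n a b F H1 + Gs n a b F H2 = Gs n a b F (\<lambda>j. H1 j + H2 j)"
  by (simp add: Gs_def sum.distrib[symmetric] algebra_simps)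
lemma Gs_addF: "Gs n a b F1 H + Gs n a b F2 H = Gs n a b (\<lambda>k. F1 k + F2 k) H"
  by (simp add: Gs_def sum.distrib[symmetric] algebra_simps)

lemma Gs_delH: "Gs n a b F (\<lambda>j. if j = 0 then h else 0) = (-1)^n * (a gchoose n) * F n * h"
  unfolding Gs_def by (subst sum_only_last) auto

lemma Gs_delF: "Gs n a b (\<lambda>k. if k = 0 then h else 0) H = (b gchoose n) * h * H n"
  unfolding Gs_def by (subst sum_only_first) auto

lemma Gs_del1F: "n \<ge> 1 \<Longrightarrow> Gs n a b (\<lambda>k. if k = 1 then h else 0) H = - a * (b gchoose (n-1)) * h * H (n-1)"
proof -
  assume "n \<ge> 1"
  have "Gs n a b (\<lambda>k. if k = 1 then h else 0) H = (\<Sum>k\<in>{1}. (-1)^k * (a gchoose k) * (b gchoose (n-k)) * h * H (n-k))"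
    unfolding Gs_def
    by (rule sum.mono_neutral_cong_left[symmetric]) (use \<open>n \<ge> 1\<close> in auto)
  then show ?thesis by simp
qed

definition Sg :: "nat \<Rightarrow> complex \<Rightarrow> complex \<Rightarrow> complex \<Rightarrow> complex \<Rightarrow> complex \<Rightarrow> complex" where
  "Sg n r s t x y = r * Gs n s t (\<lambda>k. bern_poly k y) (\<lambda>j. bern_poly j x)
     + s * Gs n t r (\<lambda>k. bern_poly k (1-x-y)) (\<lambda>j. bern_poly j y)
     + t * Gs n r s (\<lambda>k. bern_poly k x) (\<lambda>j. bern_poly j (1-x-y))"

lemma dlin: "((\<lambda>x. 1 - x - y) has_field_derivative -1) (at (x::complex))"
proof -
  have "((\<lambda>x. 1 - x - y) has_field_derivative 0 - 1 - 0) (at x)"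
    by (rule DERIV_diff[OF DERIV_diff[OF DERIV_const DERIV_ident] DERIV_const])
  then show ?thesis by simp
qed
lemma dlin2: "((\<lambda>y. 1 - x - y) has_field_derivative -1) (at (y::complex))"
proof -
  have "((\<lambda>y. (1 - x) - y) has_field_derivative 0 - 1) (at y)" by (rule DERIV_diff[OF DERIV_const DERIV_ident])
  then show ?thesis by simp
qed

lemmas GsB = Gs_deriv[where P=bern_poly and Q=bern_poly, OF bern_poly_deriv bern_poly_deriv]

lemma Sg_dx:
  assumes "r + s + t = of_nat (Suc m)"
  shows "((\<lambda>x. Sg (Suc m) r s t x y) has_field_derivative (t * Sg m r s (t-1) x y)) (at x)"
proof -
  let ?B = "\<lambda>v k. bern_poly k v"
  have d1: "((\<lambda>x. Gs (Suc m) s t (?B y) (?B x)) has_field_derivative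
      (t * Gs m s (t-1) (?B y) (?B x) * 1 - s * Gs m (s-1) t (?B y) (?B x) * 0)) (at x)"
    by (rule GsB[OF DERIV_ident DERIV_const])
  have d2: "((\<lambda>x. Gs (Suc m) t r (?B (1-x-y)) (?B y)) has_field_derivative
      (r * Gs m t (r-1) (?B (1-x-y)) (?B y) * 0 - t * Gs m (t-1) r (?B (1-x-y)) (?B y) * (-1))) (at x)"
    by (rule GsB[OF DERIV_const dlin])
  have d3: "((\<lambda>x. Gs (Suc m) r s (?B x) (?B (1-x-y))) has_field_derivative
      (s * Gs m r (s-1) (?B x) (?B (1-x-y)) * (-1) - r * Gs m (r-1) s (?B x) (?B (1-x-y)) * 1)) (at x)"
    by (rule GsB[OF dlin DERIV_ident])
  have D: "((\<lambda>x. Sg (Suc m) r s t x y) has_field_derivative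
      r * (t * Gs m s (t-1) (?B y) (?B x) * 1 - s * Gs m (s-1) t (?B y) (?B x) * 0)
    + s * (r * Gs m t (r-1) (?B (1-x-y)) (?B y) * 0 - t * Gs m (t-1) r (?B (1-x-y)) (?B y) * (-1))
    + t * (s * Gs m r (s-1) (?B x) (?B (1-x-y)) * (-1) - r * Gs m (r-1) s (?B x) (?B (1-x-y)) * 1)) (at x)"
    unfolding Sg_def by (intro DERIV_add DERIV_cmult d1 d2 d3)
  have id: "r * Gs m (r-1) s (?B x) (?B (1-x-y)) + s * Gs m r (s-1) (?B x) (?B (1-x-y))
      = (1 - t) * Gs m r s (?B x) (?B (1-x-y))"
  proof -
    have e: "r + s - of_nat m = 1 - t" using assms by (simp add: algebra_simps)
    show ?thesis using Gs_ident[of r m s "?B x" "?B (1-x-y)", unfolded e] .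
  qed
  have "r * (t * Gs m s (t-1) (?B y) (?B x) * 1 - s * Gs m (s-1) t (?B y) (?B x) * 0)
    + s * (r * Gs m t (r-1) (?B (1-x-y)) (?B y) * 0 - t * Gs m (t-1) r (?B (1-x-y)) (?B y) * (-1))
    + t * (s * Gs m r (s-1) (?B x) (?B (1-x-y)) * (-1) - r * Gs m (r-1) s (?B x) (?B (1-x-y)) * 1)
    = t * (r * Gs m s (t-1) (?B y) (?B x) + s * Gs m (t-1) r (?B (1-x-y)) (?B y))
      - t * (r * Gs m (r-1) s (?B x) (?B (1-x-y)) + s * Gs m r (s-1) (?B x) (?B (1-x-y)))"
    by (simp add: algebra_simps)
  also have "\<dots> = t * Sg m r s (t-1) x y"
    unfolding id Sg_def by (simp add: algebra_simps)
  finally show ?thesis using D by simp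
qed

lemma Sg_dy:
  assumes "r + s + t = of_nat (Suc m)"
  shows "((\<lambda>y. Sg (Suc m) r s t x y) has_field_derivative (- s * Sg m r (s-1) t x y)) (at y)"
proof -
  let ?B = "\<lambda>v k. bern_poly k v"
  have d1: "((\<lambda>y. Gs (Suc m) s t (?B y) (?B x)) has_field_derivative
      (t * Gs m s (t-1) (?B y) (?B x) * 0 - s * Gs m (s-1) t (?B y) (?B x) * 1)) (at y)"
    by (rule GsB[OF DERIV_const DERIV_ident])
  have d2: "((\<lambda>y. Gs (Suc m) t r (?B (1-x-y)) (?B y)) has_field_derivative
      (r * Gs m t (r-1) (?B (1-x-y)) (?B y) * 1 - t * Gs m (t-1) r (?B (1-x-y)) (?B y) * (-1))) (at y)"
    by (rule GsB[OF DERIV_ident dlin2])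
  have d3: "((\<lambda>y. Gs (Suc m) r s (?B x) (?B (1-x-y))) has_field_derivative
      (s * Gs m r (s-1) (?B x) (?B (1-x-y)) * (-1) - r * Gs m (r-1) s (?B x) (?B (1-x-y)) * 0)) (at y)"
    by (rule GsB[OF dlin2 DERIV_const])
  have D: "((\<lambda>y. Sg (Suc m) r s t x y) has_field_derivative
      r * (t * Gs m s (t-1) (?B y) (?B x) * 0 - s * Gs m (s-1) t (?B y) (?B x) * 1)
    + s * (r * Gs m t (r-1) (?B (1-x-y)) (?B y) * 1 - t * Gs m (t-1) r (?B (1-x-y)) (?B y) * (-1))
    + t * (s * Gs m r (s-1) (?B x) (?B (1-x-y)) * (-1) - r * Gs m (r-1) s (?B x) (?B (1-x-y)) * 0)) (at y)"
    unfolding Sg_def by (intro DERIV_add DERIV_cmult d1 d2 d3)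
  have id: "t * Gs m (t-1) r (?B (1-x-y)) (?B y) + r * Gs m t (r-1) (?B (1-x-y)) (?B y)
      = (1 - s) * Gs m t r (?B (1-x-y)) (?B y)"
  proof -
    have e: "t + r - of_nat m = 1 - s" using assms by (simp add: algebra_simps)
    show ?thesis using Gs_ident[of t m r "?B (1-x-y)" "?B y", unfolded e] .
  qed
  have "r * (t * Gs m s (t-1) (?B y) (?B x) * 0 - s * Gs m (s-1) t (?B y) (?B x) * 1)
    + s * (r * Gs m t (r-1) (?B (1-x-y)) (?B y) * 1 - t * Gs m (t-1) r (?B (1-x-y)) (?B y) * (-1))
    + t * (s * Gs m r (s-1) (?B x) (?B (1-x-y)) * (-1) - r * Gs m (r-1) s (?B x) (?B (1-x-y)) * 0)
    = - s * (r * Gs m (s-1) t (?B y) (?B x) + t * Gs m r (s-1) (?B x) (?B (1-x-y)))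
      + s * (t * Gs m (t-1) r (?B (1-x-y)) (?B y) + r * Gs m t (r-1) (?B (1-x-y)) (?B y))"
    by (simp add: algebra_simps)
  also have "\<dots> = - s * Sg m r (s-1) t x y"
    unfolding id Sg_def by (simp add: algebra_simps)
  finally show ?thesis using D by simp
qed

lemma prim: "(\<And>x. (F has_field_derivative f x) (at x)) \<Longrightarrow> (f has_contour_integral (F 1 - F 0)) (linepath 0 1)"
  using contour_integral_primitive[of UNIV F f "linepath 0 1"] by simp

lemma int_B: "((\<lambda>x. bern_poly m x) has_contour_integral (if m = 0 then 1 else 0)) (linepath 0 1)"
proof -
  have "((\<lambda>x. bern_poly (Suc m) x / of_nat (Suc m)) has_field_derivative bern_poly m x) (at x)" for x
    using DERIV_cdivide[OF bern_poly_deriv[of "Suc m" x], of "of_nat (Suc m)"] by (simp del: of_nat_Suc)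
  note I = prim[OF this]
  have v: "bern_poly (Suc m) 1 / of_nat (Suc m) - bern_poly (Suc m) 0 / of_nat (Suc m) = (if m = 0 then 1 else 0)"
    by (cases "m = 0") (simp_all add: bern_poly_at0 bern_poly_at1 field_simps del: of_nat_Suc)
  show ?thesis using I v by (simp only:)
qed

lemma int_B1: "((\<lambda>x. bern_poly m (1 - x)) has_contour_integral (if m = 0 then 1 else 0)) (linepath 0 1)"
proof -
  have "((\<lambda>x. - bern_poly (Suc m) (1 - x) / of_nat (Suc m)) has_field_derivative bern_poly m (1 - x)) (at x)" for x
  proof -
    have 1: "((\<lambda>x. bern_poly (Suc m) (1 - x)) has_field_derivative (of_nat (Suc m) * bern_poly m (1 - x) * (-1))) (at x)"
      using DERIV_chain2[OF bern_poly_deriv[of "Suc m"] DERIV_diff[OF DERIV_const DERIV_ident, of 1 x]] by simp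
    show ?thesis using DERIV_cdivide[OF DERIV_minus[OF 1], of "of_nat (Suc m)"] by (simp del: of_nat_Suc)
  qed
  note I = prim[OF this]
  have v: "- bern_poly (Suc m) (1 - 1) / of_nat (Suc m) - - bern_poly (Suc m) (1 - 0) / of_nat (Suc m) = (if m = 0 then 1 else 0)"
    by (cases "m = 0") (simp_all add: bern_poly_at0 bern_poly_at1 field_simps del: of_nat_Suc)
  show ?thesis using I v by (simp only:)
qed

definition Jv :: "nat \<Rightarrow> nat \<Rightarrow> complex" where
  "Jv p q = (if p = 0 then (if q = 0 then 1 else 0) else if q = 0 then 0
             else - (fact p * fact q / fact (p + q)) * bern (p + q))"

lemma int_J: "((\<lambda>x. bern_poly p (1 - x) * bern_poly q x) has_contour_integral Jv p q) (linepath 0 1)"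
proof (induction p arbitrary: q)
  case 0
  have "(\<lambda>x. bern_poly 0 (1 - x) * bern_poly q x) = (\<lambda>x. bern_poly q x)" by (simp add: bern_poly_0)
  moreover have "Jv 0 q = (if q = 0 then 1 else 0)" by (simp add: Jv_def)
  ultimately show ?case using int_B[of q] by (simp only:)
next
  case (Suc p)
  show ?case
  proof (cases q)
    case 0
    have "(\<lambda>x. bern_poly (Suc p) (1 - x) * bern_poly q x) = (\<lambda>x. bern_poly (Suc p) (1 - x))" using 0 by (simp add: bern_poly_0)
    moreover have "Jv (Suc p) q = (if Suc p = 0 then 1 else 0)" using 0 by (simp add: Jv_def)
    ultimately show ?thesis using int_B1[of "Suc p"] by (simp only:)
  next
    case (Suc q')
    define G where "G x = bern_poly (Suc p) (1 - x) * bern_poly (Suc q) x / of_nat (Suc q)" for x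
    define G' where "G' x = (of_nat (Suc p) * bern_poly p (1 - x) * (-1) * bern_poly (Suc q) x
        + of_nat (Suc q) * bern_poly q x * bern_poly (Suc p) (1 - x)) / of_nat (Suc q)" for x
    have dG: "(G has_field_derivative G' x) (at x)" for x
    proof -
      have 1: "((\<lambda>x. bern_poly (Suc p) (1 - x)) has_field_derivative (of_nat (Suc p) * bern_poly p (1 - x) * (-1))) (at x)"
        using DERIV_chain2[OF bern_poly_deriv[of "Suc p"] DERIV_diff[OF DERIV_const DERIV_ident, of 1 x]] by simp
      have 2: "(bern_poly (Suc q) has_field_derivative (of_nat (Suc q) * bern_poly q x)) (at x)"
        using bern_poly_deriv[of "Suc q" x] by simp
      have "((\<lambda>x. bern_poly (Suc p) (1 - x) * bern_poly (Suc q) x / of_nat (Suc q)) has_field_derivative G' x) (at x)"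
        unfolding G'_def by (rule DERIV_cdivide[OF DERIV_mult[OF 1 2]])
      then show ?thesis by (simp add: G_def[abs_def])
    qed
    have I1: "(G' has_contour_integral (G 1 - G 0)) (linepath 0 1)" by (rule prim[OF dG])
    have I2: "((\<lambda>x. of_nat (Suc p) / of_nat (Suc q) * (bern_poly p (1 - x) * bern_poly (Suc q) x))
        has_contour_integral (of_nat (Suc p) / of_nat (Suc q) * Jv p (Suc q))) (linepath 0 1)"
      by (rule has_contour_integral_lmul[OF Suc.IH])
    have I3: "((\<lambda>x. G' x + of_nat (Suc p) / of_nat (Suc q) * (bern_poly p (1 - x) * bern_poly (Suc q) x))
        has_contour_integral (G 1 - G 0 + of_nat (Suc p) / of_nat (Suc q) * Jv p (Suc q))) (linepath 0 1)"
      by (rule has_contour_integral_add[OF I1 I2])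
    have pw: "G' x + of_nat (Suc p) / of_nat (Suc q) * (bern_poly p (1 - x) * bern_poly (Suc q) x)
        = bern_poly (Suc p) (1 - x) * bern_poly q x" for x
      unfolding G'_def by (simp add: field_simps del: of_nat_Suc)
    have val: "G 1 - G 0 + of_nat (Suc p) / of_nat (Suc q) * Jv p (Suc q) = Jv (Suc p) q"
    proof -
      have q1: "Suc q \<noteq> 1" using Suc by simp
      have "G 1 - G 0 = - (if p = 0 then bern (Suc q) / of_nat (Suc q) else 0)"
        unfolding G_def using q1 by (simp add: bern_poly_at0 bern_poly_at1 field_simps del: of_nat_Suc)
      moreover have "q \<noteq> 0" using Suc by simp
      moreover have fq: "(fact (Suc q) :: complex) = of_nat (Suc q) * fact q" by (simp del: of_nat_Suc)
      moreover have fp: "(fact (Suc p) :: complex) = of_nat (Suc p) * fact p" by (simp del: of_nat_Suc)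
      moreover have "p + Suc q = Suc p + q" by simp
      moreover have "(fact (Suc p + q) :: complex) \<noteq> 0" by (rule fact_nonzero)
      moreover have "(of_nat (Suc q) :: complex) \<noteq> 0" by (simp del: of_nat_Suc)
      ultimately show ?thesis
      proof (cases "p = 0")
        case True
        then show ?thesis using \<open>G 1 - G 0 = _\<close> \<open>q \<noteq> 0\<close> fq
          by (simp add: Jv_def field_simps del: of_nat_Suc fact_Suc)
      next
        case False
        then show ?thesis using \<open>G 1 - G 0 = _\<close> \<open>q \<noteq> 0\<close> fq fp \<open>p + Suc q = Suc p + q\<close>
          by (simp add: Jv_def field_simps del: of_nat_Suc fact_Suc)
      qed
    qed
    have "((\<lambda>x. bern_poly (Suc p) (1 - x) * bern_poly q x) has_contour_integral
        (G 1 - G 0 + of_nat (Suc p) / of_nat (Suc q) * Jv p (Suc q))) (linepath 0 1)"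
      by (rule has_contour_integral_eq[OF I3]) (rule pw)
    then show ?thesis unfolding val .
  qed
qed

lemma Gs_int:
  assumes "\<And>k. k \<le> n \<Longrightarrow> ((\<lambda>x. F k x * H (n-k) x) has_contour_integral I k) g"
  shows "((\<lambda>x. Gs n a b (\<lambda>k. F k x) (\<lambda>j. H j x)) has_contour_integral
     (\<Sum>k\<le>n. (-1)^k * (a gchoose k) * (b gchoose (n-k)) * I k)) g"
proof -
  have "((\<lambda>x. \<Sum>k\<le>n. (-1)^k * (a gchoose k) * (b gchoose (n-k)) * (F k x * H (n-k) x)) has_contour_integral
     (\<Sum>k\<le>n. (-1)^k * (a gchoose k) * (b gchoose (n-k)) * I k)) g"
    by (rule has_contour_integral_sum) (auto intro!: has_contour_integral_lmul assms)
  moreover have "(\<lambda>x. Gs n a b (\<lambda>k. F k x) (\<lambda>j. H j x)) =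
      (\<lambda>x. \<Sum>k\<le>n. (-1)^k * (a gchoose k) * (b gchoose (n-k)) * (F k x * H (n-k) x))"
    by (simp add: Gs_def mult.assoc)
  ultimately show ?thesis by simp
qed

definition ff :: "complex \<Rightarrow> nat \<Rightarrow> complex" where
  "ff a k = (\<Prod>i = 0..<k. a - of_nat i)"

lemma ff_gchoose: "(a gchoose k) * fact k = ff a k"
  by (simp add: ff_def gbinomial_mult_fact')

lemma ff_0: "ff a 0 = 1" by (simp add: ff_def)
lemma ff_Suc: "ff a (Suc k) = ff a k * (a - of_nat k)" by (simp add: ff_def)

lemma ff_tele:
  "(r + s - of_nat n) * (\<Sum>k\<le>n. (-1)^k * ff r k * ff s (n-k)) = ff s (Suc n) - (-1)^(Suc n) * ff r (Suc n)"
proof -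
  define f where "f k = (-1)^k * ff r k * ff s (Suc n - k)" for k
  have "(r + s - of_nat n) * (\<Sum>k\<le>n. (-1)^k * ff r k * ff s (n-k)) = (\<Sum>k\<le>n. f k - f (Suc k))"
    unfolding sum_distrib_left
  proof (rule sum.cong)
    fix k assume "k \<in> {..n}"
    hence kn: "k \<le> n" by simp
    have e1: "Suc n - k = Suc (n - k)" using kn by simp
    have e2: "(of_nat (n - k) :: complex) = of_nat n - of_nat k" using kn by (simp add: of_nat_diff)
    show "(r + s - of_nat n) * ((-1)^k * ff r k * ff s (n-k)) = f k - f (Suc k)"
      unfolding f_def e1 by (simp add: ff_Suc ff_0 e2 algebra_simps)
  qed simp
  also have "\<dots> = f 0 - f (Suc n)" by (rule sum_telescope)
  also have "\<dots> = ff s (Suc n) - (-1)^(Suc n) * ff r (Suc n)" by (simp add: f_def ff_0)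
  finally show ?thesis .
qed

lemma sum_inner: fixes n :: nat assumes "n \<ge> 1"
  shows "(\<Sum>k\<le>n. if 0 < k \<and> k < n then Y k else 0) = (\<Sum>k\<le>n. Y k) - Y 0 - (Y n :: complex)"
proof -
  have "(\<Sum>k\<le>n. Y k) = (\<Sum>k\<le>n. (if 0 < k \<and> k < n then Y k else 0) + ((if k = 0 then Y k else 0) + (if k = n then Y k else 0)))"
    by (rule sum.cong) (use assms in auto)
  also have "\<dots> = (\<Sum>k\<le>n. if 0 < k \<and> k < n then Y k else 0) + (Y 0 + Y n)"
    by (simp add: sum.distrib)
  finally show ?thesis by simp
qed

lemma final2:
  assumes n1: "n \<ge> 1" and rst: "r + s + t = of_nat n"
  shows "r * ((-1)^n * (s gchoose n) * bern n) + s * ((r gchoose n) * bern n)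
     + t * (\<Sum>k\<le>n. (-1)^k * (r gchoose k) * (s gchoose (n-k)) * Jv (n-k) k) = 0"
proof -
  define X where "X k = (-1)^k * ff r k * ff s (n-k)" for k
  define W where "W = (\<Sum>k\<le>n. X k)"
  define A where "A = ff s n"
  define Bv where "Bv = ff r n"
  define \<sigma> where "\<sigma> = ((-1)^n :: complex)"
  define \<beta> where "\<beta> = bern n"
  define F where "F = (fact n :: complex)"
  have F0: "F \<noteq> 0" by (simp add: F_def)
  have gs: "(s gchoose n) = A / F" using ff_gchoose[of s n] F0 by (simp add: A_def F_def field_simps)
  have gr: "(r gchoose n) = Bv / F" using ff_gchoose[of r n] F0 by (simp add: Bv_def F_def field_simps)
  have X0: "X 0 = A" by (simp add: X_def A_def ff_0)
  have Xn: "X n = \<sigma> * Bv" by (simp add: X_def Bv_def \<sigma>_def ff_0)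
  have S3: "(\<Sum>k\<le>n. (-1)^k * (r gchoose k) * (s gchoose (n-k)) * Jv (n-k) k)
      = (\<Sum>k\<le>n. if 0 < k \<and> k < n then - \<beta> / F * X k else 0)"
  proof (rule sum.cong)
    fix k assume "k \<in> {..n}"
    hence kn: "k \<le> n" by simp
    show "(-1)^k * (r gchoose k) * (s gchoose (n-k)) * Jv (n-k) k = (if 0 < k \<and> k < n then - \<beta> / F * X k else 0)"
    proof (cases "0 < k \<and> k < n")
      case True
      have e: "n - k + k = n" using kn by simp
      have "(-1)^k * (r gchoose k) * (s gchoose (n-k)) * Jv (n-k) k
          = - \<beta> / F * ((-1)^k * ((r gchoose k) * fact k) * ((s gchoose (n-k)) * fact (n-k)))"
        using True F0 by (simp add: Jv_def e \<beta>_def F_def field_simps)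
      then show ?thesis using True by (simp add: ff_gchoose X_def)
    next
      case False
      then have "k = 0 \<or> k = n" using kn by auto
      then show ?thesis using False n1 by (auto simp: Jv_def)
    qed
  qed simp
  also have "\<dots> = - \<beta> / F * (W - A - \<sigma> * Bv)"
    using sum_inner[OF n1, of "\<lambda>k. - \<beta> / F * X k"] X0 Xn by (simp add: W_def sum_distrib_left algebra_simps)
  finally have S3': "(\<Sum>k\<le>n. (-1)^k * (r gchoose k) * (s gchoose (n-k)) * Jv (n-k) k) = - \<beta> / F * (W - A - \<sigma> * Bv)" .
  have tele: "(r + s - of_nat n) * W = A * (s - of_nat n) + \<sigma> * Bv * (r - of_nat n)"
    using ff_tele[of r s n] by (simp add: W_def X_def A_def Bv_def \<sigma>_def ff_Suc mult.assoc)
  have tW: "t * W = - (A * (s - of_nat n) + \<sigma> * Bv * (r - of_nat n))"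
  proof -
    have "r + s - of_nat n = - t" using rst by (simp add: algebra_simps)
    then have "- (t * W) = A * (s - of_nat n) + \<sigma> * Bv * (r - of_nat n)" using tele by simp
    then show ?thesis by (simp add: minus_equation_iff[of "t * W"])
  qed
  have tdef: "t = of_nat n - r - s" using rst by (simp add: algebra_simps)
  have "F * (r * (\<sigma> * (A / F) * \<beta>) + s * ((Bv / F) * \<beta>) + t * (- \<beta> / F * (W - A - \<sigma> * Bv)))
      = r * \<sigma> * A * \<beta> + s * Bv * \<beta> - \<beta> * (t * W) + \<beta> * t * A + \<beta> * t * \<sigma> * Bv"
    using F0 by (simp add: field_simps)
  also have "\<dots> = \<beta> * (\<sigma> - 1) * (A * r - Bv * s)"
    unfolding tW by (simp add: tdef algebra_simps)
  finally have key: "F * (r * (\<sigma> * (A / F) * \<beta>) + s * ((Bv / F) * \<beta>) + t * (- \<beta> / F * (W - A - \<sigma> * Bv)))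
      = \<beta> * (\<sigma> - 1) * (A * r - Bv * s)" .
  have z: "\<beta> * (\<sigma> - 1) * (A * r - Bv * s) = 0"
  proof (cases "even n")
    case True then show ?thesis by (simp add: \<sigma>_def)
  next
    case False
    show ?thesis
    proof (cases "n = 1")
      case True then show ?thesis by (simp add: A_def Bv_def ff_def)
    next
      case False
      then have "\<beta> = 0" using \<open>odd n\<close> by (simp add: \<beta>_def bern_odd)
      then show ?thesis by simp
    qed
  qed
  have "F * (r * (\<sigma> * (A / F) * \<beta>) + s * ((Bv / F) * \<beta>) + t * (- \<beta> / F * (W - A - \<sigma> * Bv))) = 0"
    using key z by simp
  hence E: "r * (\<sigma> * (A / F) * \<beta>) + s * ((Bv / F) * \<beta>) + t * (- \<beta> / F * (W - A - \<sigma> * Bv)) = 0"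
    using F0 by simp
  show ?thesis unfolding S3' gs gr \<sigma>_def[symmetric] \<beta>_def[symmetric] by (rule E)
qed

lemma const_int: "((\<lambda>x. c) has_contour_integral c) (linepath 0 1)"
proof -
  have "((\<lambda>x. c) has_contour_integral ((\<lambda>x. c * x) 1 - (\<lambda>x. c * x) 0)) (linepath 0 1)"
    by (rule prim) (use DERIV_cmult[OF DERIV_ident, of c] in simp)
  then show ?thesis by simp
qed

lemma part2: "r + s + t = of_nat n \<Longrightarrow> Sg n r s t x y = 0"
proof (induction n arbitrary: r s t x y)
  case 0
  then show ?case by (simp add: Sg_def Gs_0 bern_poly_0 algebra_simps)
next
  case (Suc m)
  have cx: "Sg (Suc m) r s t x y = Sg (Suc m) r s t 0 y" for x y
  proof (rule zero_deriv_const[where f="\<lambda>x. Sg (Suc m) r s t x y"])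
    fix x
    have "r + s + (t - 1) = of_nat m" using Suc.prems by (simp add: algebra_simps)
    then have "Sg m r s (t-1) x y = 0" by (rule Suc.IH)
    then show "((\<lambda>x. Sg (Suc m) r s t x y) has_field_derivative 0) (at x)"
      using Sg_dx[OF Suc.prems, where x=x and y=y] by simp
  qed
  have cy: "Sg (Suc m) r s t 0 y = Sg (Suc m) r s t 0 0" for y
  proof (rule zero_deriv_const[where f="\<lambda>y. Sg (Suc m) r s t 0 y"])
    fix y
    have "r + (s - 1) + t = of_nat m" using Suc.prems by (simp add: algebra_simps)
    then have "Sg m r (s-1) t 0 y = 0" by (rule Suc.IH)
    then show "((\<lambda>y. Sg (Suc m) r s t 0 y) has_field_derivative 0) (at y)"
      using Sg_dy[OF Suc.prems, where x=0 and y=y] by simp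
  qed
  define c where "c = Sg (Suc m) r s t 0 0"
  define n where "n = Suc m"
  have n1: "n \<ge> 1" by (simp add: n_def)
  have allc: "Sg n r s t x 0 = c" for x using cx[of x 0] by (simp add: c_def n_def)
  have rst: "r + s + t = of_nat n" using Suc.prems by (simp add: n_def)
  have K1: "((\<lambda>x. Gs n s t (\<lambda>k. bern_poly k 0) (\<lambda>j. bern_poly j x)) has_contour_integral
     (\<Sum>k\<le>n. (-1)^k * (s gchoose k) * (t gchoose (n-k)) * (bern_poly k 0 * (if n - k = 0 then 1 else 0)))) (linepath 0 1)"
    by (rule Gs_int[where F="\<lambda>k x. bern_poly k 0" and H="\<lambda>j x. bern_poly j x"])
       (rule has_contour_integral_lmul[OF int_B])
  have K2: "((\<lambda>x. Gs n t r (\<lambda>k. bern_poly k (1 - x)) (\<lambda>j. bern_poly j 0)) has_contour_integral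
     (\<Sum>k\<le>n. (-1)^k * (t gchoose k) * (r gchoose (n-k)) * ((if k = 0 then 1 else 0) * bern_poly (n-k) 0))) (linepath 0 1)"
    by (rule Gs_int[where F="\<lambda>k x. bern_poly k (1 - x)" and H="\<lambda>j x. bern_poly j 0"])
       (rule has_contour_integral_rmul[OF int_B1])
  have K3: "((\<lambda>x. Gs n r s (\<lambda>k. bern_poly k x) (\<lambda>j. bern_poly j (1 - x))) has_contour_integral
     (\<Sum>k\<le>n. (-1)^k * (r gchoose k) * (s gchoose (n-k)) * Jv (n-k) k)) (linepath 0 1)"
  proof (rule Gs_int[where F="\<lambda>k x. bern_poly k x" and H="\<lambda>j x. bern_poly j (1 - x)"])
    fix k
    have "(\<lambda>x. bern_poly k x * bern_poly (n - k) (1 - x)) = (\<lambda>x. bern_poly (n - k) (1 - x) * bern_poly k x)"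
      by (simp add: mult.commute)
    then show "((\<lambda>x. bern_poly k x * bern_poly (n - k) (1 - x)) has_contour_integral Jv (n - k) k) (linepath 0 1)"
      using int_J[of "n-k" k] by simp
  qed
  have V1: "(\<Sum>k\<le>n. (-1)^k * (s gchoose k) * (t gchoose (n-k)) * (bern_poly k 0 * (if n - k = 0 then 1 else 0)))
      = (-1)^n * (s gchoose n) * bern n"
    by (subst sum_only_last) (auto simp: bern_poly_at0)
  have V2: "(\<Sum>k\<le>n. (-1)^k * (t gchoose k) * (r gchoose (n-k)) * ((if k = 0 then 1 else 0) * bern_poly (n-k) 0))
      = (r gchoose n) * bern n"
    by (subst sum_only_first) (auto simp: bern_poly_at0)
  have KK: "((\<lambda>x. r * Gs n s t (\<lambda>k. bern_poly k 0) (\<lambda>j. bern_poly j x)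
      + s * Gs n t r (\<lambda>k. bern_poly k (1 - x)) (\<lambda>j. bern_poly j 0)
      + t * Gs n r s (\<lambda>k. bern_poly k x) (\<lambda>j. bern_poly j (1 - x))) has_contour_integral
     (r * ((-1)^n * (s gchoose n) * bern n) + s * ((r gchoose n) * bern n)
     + t * (\<Sum>k\<le>n. (-1)^k * (r gchoose k) * (s gchoose (n-k)) * Jv (n-k) k))) (linepath 0 1)"
    by (intro has_contour_integral_add has_contour_integral_lmul K1[unfolded V1] K2[unfolded V2] K3)
  have "(\<lambda>x. r * Gs n s t (\<lambda>k. bern_poly k 0) (\<lambda>j. bern_poly j x)
      + s * Gs n t r (\<lambda>k. bern_poly k (1 - x)) (\<lambda>j. bern_poly j 0)
      + t * Gs n r s (\<lambda>k. bern_poly k x) (\<lambda>j. bern_poly j (1 - x))) = (\<lambda>x. c)"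
    using allc by (simp add: Sg_def fun_eq_iff)
  with KK have "((\<lambda>x. c) has_contour_integral
     (r * ((-1)^n * (s gchoose n) * bern n) + s * ((r gchoose n) * bern n)
     + t * (\<Sum>k\<le>n. (-1)^k * (r gchoose k) * (s gchoose (n-k)) * Jv (n-k) k))) (linepath 0 1)" by simp
  then have "c = r * ((-1)^n * (s gchoose n) * bern n) + s * ((r gchoose n) * bern n)
     + t * (\<Sum>k\<le>n. (-1)^k * (r gchoose k) * (s gchoose (n-k)) * Jv (n-k) k)"
    using has_contour_integral_unique[OF const_int] by blast
  also have "\<dots> = 0" by (rule final2[OF n1 rst])
  finally have "c = 0" .
  then show ?case using cx[of x y] cy[of y] by (simp add: c_def)
qed


definition Tg :: "nat \<Rightarrow> complex \<Rightarrow> complex \<Rightarrow> complex \<Rightarrow> complex \<Rightarrow> complex \<Rightarrow> complex" where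
  "Tg n r s t x y = Gs n r s (\<lambda>k. bern_poly k x) (\<lambda>j. eul_poly j (1-x-y))
     - (-1)^n * Gs n r t (\<lambda>k. bern_poly k y) (\<lambda>j. eul_poly j (1-x-y))
     - r / 2 * Gs (n-1) s t (\<lambda>l. eul_poly l y) (\<lambda>j. eul_poly j x)"

lemmas GsBE = Gs_deriv[where P=bern_poly and Q=eul_poly, OF bern_poly_deriv eul_poly_deriv]
lemmas GsEE = Gs_deriv[where P=eul_poly and Q=eul_poly, OF eul_poly_deriv eul_poly_deriv]

lemma Tg_dx:
  assumes "r + s + t = of_nat (Suc m)"
  shows "((\<lambda>x. Tg (Suc (Suc m)) r s t x y) has_field_derivative (t * Tg (Suc m) r s (t-1) x y)) (at x)"
proof -
  let ?B = "\<lambda>v k. bern_poly k v"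
  let ?E = "\<lambda>v k. eul_poly k v"
  have d1: "((\<lambda>x. Gs (Suc (Suc m)) r s (?B x) (?E (1-x-y))) has_field_derivative
      (s * Gs (Suc m) r (s-1) (?B x) (?E (1-x-y)) * (-1) - r * Gs (Suc m) (r-1) s (?B x) (?E (1-x-y)) * 1)) (at x)"
    by (rule GsBE[OF dlin DERIV_ident])
  have d2: "((\<lambda>x. Gs (Suc (Suc m)) r t (?B y) (?E (1-x-y))) has_field_derivative
      (t * Gs (Suc m) r (t-1) (?B y) (?E (1-x-y)) * (-1) - r * Gs (Suc m) (r-1) t (?B y) (?E (1-x-y)) * 0)) (at x)"
    by (rule GsBE[OF dlin DERIV_const])
  have d3: "((\<lambda>x. Gs (Suc m) s t (?E y) (?E x)) has_field_derivative
      (t * Gs m s (t-1) (?E y) (?E x) * 1 - s * Gs m (s-1) t (?E y) (?E x) * 0)) (at x)"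
    by (rule GsEE[OF DERIV_ident DERIV_const])
  have D: "((\<lambda>x. Tg (Suc (Suc m)) r s t x y) has_field_derivative
      (s * Gs (Suc m) r (s-1) (?B x) (?E (1-x-y)) * (-1) - r * Gs (Suc m) (r-1) s (?B x) (?E (1-x-y)) * 1)
      - (-1)^(Suc (Suc m)) * (t * Gs (Suc m) r (t-1) (?B y) (?E (1-x-y)) * (-1) - r * Gs (Suc m) (r-1) t (?B y) (?E (1-x-y)) * 0)
      - r / 2 * (t * Gs m s (t-1) (?E y) (?E x) * 1 - s * Gs m (s-1) t (?E y) (?E x) * 0)) (at x)"
    unfolding Tg_def diff_Suc_1 by (intro DERIV_diff DERIV_cmult d1 d2 d3)
  have id: "r * Gs (Suc m) (r-1) s (?B x) (?E (1-x-y)) + s * Gs (Suc m) r (s-1) (?B x) (?E (1-x-y))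
      = (- t) * Gs (Suc m) r s (?B x) (?E (1-x-y))"
  proof -
    have e: "r + s - of_nat (Suc m) = - t" using assms by (simp add: algebra_simps)
    show ?thesis using Gs_ident[of r "Suc m" s "?B x" "?E (1-x-y)", unfolded e] .
  qed
  have "(s * Gs (Suc m) r (s-1) (?B x) (?E (1-x-y)) * (-1) - r * Gs (Suc m) (r-1) s (?B x) (?E (1-x-y)) * 1)
      - (-1)^(Suc (Suc m)) * (t * Gs (Suc m) r (t-1) (?B y) (?E (1-x-y)) * (-1) - r * Gs (Suc m) (r-1) t (?B y) (?E (1-x-y)) * 0)
      - r / 2 * (t * Gs m s (t-1) (?E y) (?E x) * 1 - s * Gs m (s-1) t (?E y) (?E x) * 0)
    = - (r * Gs (Suc m) (r-1) s (?B x) (?E (1-x-y)) + s * Gs (Suc m) r (s-1) (?B x) (?E (1-x-y)))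
      + (-1)^m * t * Gs (Suc m) r (t-1) (?B y) (?E (1-x-y)) - r / 2 * t * Gs m s (t-1) (?E y) (?E x)"
    by (simp add: algebra_simps)
  also have "\<dots> = t * Tg (Suc m) r s (t-1) x y"
    unfolding id Tg_def by (simp add: algebra_simps)
  finally show ?thesis using D by simp
qed

lemma Tg_dy:
  assumes "r + s + t = of_nat (Suc m)"
  shows "((\<lambda>y. Tg (Suc (Suc m)) r s t x y) has_field_derivative (- s * Tg (Suc m) r (s-1) t x y)) (at y)"
proof -
  let ?B = "\<lambda>v k. bern_poly k v"
  let ?E = "\<lambda>v k. eul_poly k v"
  have d1: "((\<lambda>y. Gs (Suc (Suc m)) r s (?B x) (?E (1-x-y))) has_field_derivative
      (s * Gs (Suc m) r (s-1) (?B x) (?E (1-x-y)) * (-1) - r * Gs (Suc m) (r-1) s (?B x) (?E (1-x-y)) * 0)) (at y)"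
    by (rule GsBE[OF dlin2 DERIV_const])
  have d2: "((\<lambda>y. Gs (Suc (Suc m)) r t (?B y) (?E (1-x-y))) has_field_derivative
      (t * Gs (Suc m) r (t-1) (?B y) (?E (1-x-y)) * (-1) - r * Gs (Suc m) (r-1) t (?B y) (?E (1-x-y)) * 1)) (at y)"
    by (rule GsBE[OF dlin2 DERIV_ident])
  have d3: "((\<lambda>y. Gs (Suc m) s t (?E y) (?E x)) has_field_derivative
      (t * Gs m s (t-1) (?E y) (?E x) * 0 - s * Gs m (s-1) t (?E y) (?E x) * 1)) (at y)"
    by (rule GsEE[OF DERIV_const DERIV_ident])
  have D: "((\<lambda>y. Tg (Suc (Suc m)) r s t x y) has_field_derivative
      (s * Gs (Suc m) r (s-1) (?B x) (?E (1-x-y)) * (-1) - r * Gs (Suc m) (r-1) s (?B x) (?E (1-x-y)) * 0)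
      - (-1)^(Suc (Suc m)) * (t * Gs (Suc m) r (t-1) (?B y) (?E (1-x-y)) * (-1) - r * Gs (Suc m) (r-1) t (?B y) (?E (1-x-y)) * 1)
      - r / 2 * (t * Gs m s (t-1) (?E y) (?E x) * 0 - s * Gs m (s-1) t (?E y) (?E x) * 1)) (at y)"
    unfolding Tg_def diff_Suc_1 by (intro DERIV_diff DERIV_cmult d1 d2 d3)
  have id: "r * Gs (Suc m) (r-1) t (?B y) (?E (1-x-y)) + t * Gs (Suc m) r (t-1) (?B y) (?E (1-x-y))
      = (- s) * Gs (Suc m) r t (?B y) (?E (1-x-y))"
  proof -
    have e: "r + t - of_nat (Suc m) = - s" using assms by (simp add: algebra_simps)
    show ?thesis using Gs_ident[of r "Suc m" t "?B y" "?E (1-x-y)", unfolded e] .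
  qed
  have "(s * Gs (Suc m) r (s-1) (?B x) (?E (1-x-y)) * (-1) - r * Gs (Suc m) (r-1) s (?B x) (?E (1-x-y)) * 0)
      - (-1)^(Suc (Suc m)) * (t * Gs (Suc m) r (t-1) (?B y) (?E (1-x-y)) * (-1) - r * Gs (Suc m) (r-1) t (?B y) (?E (1-x-y)) * 1)
      - r / 2 * (t * Gs m s (t-1) (?E y) (?E x) * 0 - s * Gs m (s-1) t (?E y) (?E x) * 1)
    = - s * Gs (Suc m) r (s-1) (?B x) (?E (1-x-y))
      + (-1)^m * (r * Gs (Suc m) (r-1) t (?B y) (?E (1-x-y)) + t * Gs (Suc m) r (t-1) (?B y) (?E (1-x-y)))
      + r / 2 * s * Gs m (s-1) t (?E y) (?E x)"
    by (simp add: algebra_simps)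
  also have "\<dots> = - s * Tg (Suc m) r (s-1) t x y"
    unfolding id Tg_def by (simp add: algebra_simps)
  finally show ?thesis using D by simp
qed

lemma Tg_base: "r + s + t = 0 \<Longrightarrow> Tg 1 r s t x y = 0"
proof -
  assume h: "r + s + t = 0"
  have t: "t = - r - s"
  proof -
    have "t = (r + s + t) - r - s" by simp
    also have "\<dots> = - r - s" using h by simp
    finally show ?thesis .
  qed
  show ?thesis
    by (simp add: Tg_def Gs_def bern_poly_0 eul_poly_0 bern_poly_1[unfolded One_nat_def] eul_poly_1[unfolded One_nat_def] t algebra_simps)
qed

lemma part1: "r + s + t = of_nat m \<Longrightarrow> Tg (Suc m) r s t x y = 0"
proof (induction m arbitrary: r s t x y)
  case 0
  then show ?case using Tg_base by simp
next
  case (Suc m)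
  have cx: "Tg (Suc (Suc m)) r s t x y = Tg (Suc (Suc m)) r s t 0 y" for x y
  proof (rule zero_deriv_const[where f="\<lambda>x. Tg (Suc (Suc m)) r s t x y"])
    fix x
    have "r + s + (t - 1) = of_nat m" using Suc.prems by (simp add: algebra_simps)
    then have "Tg (Suc m) r s (t-1) x y = 0" by (rule Suc.IH)
    then show "((\<lambda>x. Tg (Suc (Suc m)) r s t x y) has_field_derivative 0) (at x)"
      using Tg_dx[OF Suc.prems, where x=x and y=y] by simp
  qed
  have cy: "Tg (Suc (Suc m)) r s t 0 y = Tg (Suc (Suc m)) r s t 0 0" for y
  proof (rule zero_deriv_const[where f="\<lambda>y. Tg (Suc (Suc m)) r s t 0 y"])
    fix y
    have "r + (s - 1) + t = of_nat m" using Suc.prems by (simp add: algebra_simps)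
    then have "Tg (Suc m) r (s-1) t 0 y = 0" by (rule Suc.IH)
    then show "((\<lambda>y. Tg (Suc (Suc m)) r s t 0 y) has_field_derivative 0) (at y)"
      using Tg_dy[OF Suc.prems, where x=0 and y=y] by simp
  qed
  define N where "N = Suc (Suc m)"
  define c where "c = Tg N r s t 0 0"
  have c1: "Tg N r s t 0 1 = c" using cy[of 1] by (simp add: c_def N_def)
  let ?B = "\<lambda>v k. bern_poly k v"
  let ?E = "\<lambda>v k. eul_poly k v"
  define \<sigma> where "\<sigma> = ((-1)^N :: complex)"
  have hB1: "?B 1 = (\<lambda>k. ?B 0 k + (if k = 1 then 1 else 0))"
    by (simp add: fun_eq_iff bern_poly_at0 bern_poly_at1)
  have hE: "(\<lambda>j. ?E 1 j + ?E 0 j) = (\<lambda>j. if j = 0 then 2 else 0)"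
    by (simp add: fun_eq_iff eul_poly_sum01)
  have hE': "(\<lambda>j. ?E 0 j + ?E 1 j) = (\<lambda>j. if j = 0 then 2 else 0)"
    by (simp add: fun_eq_iff eul_poly_sum01 add.commute)
  have N1: "N - 1 = Suc m" "N \<ge> 1" by (simp_all add: N_def)
  have A: "Gs N r s (?B 0) (?E 1) + Gs N r s (?B 0) (?E 0) = \<sigma> * (r gchoose N) * bern N * 2"
    unfolding Gs_addH hE Gs_delH by (simp add: \<sigma>_def bern_poly_at0)
  have Bq: "Gs N r t (?B 0) (?E 1) + Gs N r t (?B 1) (?E 0)
      = \<sigma> * (r gchoose N) * bern N * 2 - r * (t gchoose (N-1)) * eul_poly (N-1) 0"
  proof -
    have "Gs N r t (?B 1) (?E 0) = Gs N r t (?B 0) (?E 0) + Gs N r t (\<lambda>k. if k = 1 then 1 else 0) (?E 0)"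
      unfolding hB1 Gs_addF ..
    then have "Gs N r t (?B 0) (?E 1) + Gs N r t (?B 1) (?E 0)
        = Gs N r t (?B 0) (\<lambda>j. ?E 1 j + ?E 0 j) + Gs N r t (\<lambda>k. if k = 1 then 1 else 0) (?E 0)"
      by (simp add: Gs_addH[symmetric] algebra_simps)
    also have "\<dots> = \<sigma> * (r gchoose N) * bern N * 2 - r * (t gchoose (N-1)) * eul_poly (N-1) 0"
      unfolding hE Gs_delH Gs_del1F[OF N1(2)] by (simp add: \<sigma>_def bern_poly_at0)
    finally show ?thesis .
  qed
  have C: "Gs (N-1) s t (?E 0) (?E 0) + Gs (N-1) s t (?E 1) (?E 0) = (t gchoose (N-1)) * 2 * eul_poly (N-1) 0"
    unfolding Gs_addF hE' Gs_delF ..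
  have "2 * c = Tg N r s t 0 0 + Tg N r s t 0 1" using c1 by (simp add: c_def)
  also have "\<dots> = (Gs N r s (?B 0) (?E 1) + Gs N r s (?B 0) (?E 0))
      - \<sigma> * (Gs N r t (?B 0) (?E 1) + Gs N r t (?B 1) (?E 0))
      - r / 2 * (Gs (N-1) s t (?E 0) (?E 0) + Gs (N-1) s t (?E 1) (?E 0))"
    by (simp add: Tg_def \<sigma>_def algebra_simps)
  also have "\<dots> = (\<sigma> - 1) * (2 * (r gchoose N) * bern N + r * (t gchoose (N-1)) * eul_poly (N-1) 0)
      + (1 - \<sigma> * \<sigma>) * (2 * (r gchoose N) * bern N)"
    unfolding A Bq C by (simp add: algebra_simps)
  also have "\<dots> = 0"
  proof (cases "even N")
    case True then show ?thesis by (simp add: \<sigma>_def)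
  next
    case False
    then have "bern N = 0" by (intro bern_odd) (auto simp: N_def)
    moreover have "eul_poly (N-1) 0 = 0" using False by (intro eul_poly_even0) (auto simp: N_def)
    moreover have "\<sigma> * \<sigma> = 1" by (simp add: \<sigma>_def power_mult_distrib[symmetric])
    ultimately show ?thesis by simp
  qed
  finally have "c = 0" by simp
  then show ?case using cx[of x y] cy[of y] by (simp add: c_def N_def)
qed


lemma M_Gs: "M_sum n a b u v = Gs n a b (\<lambda>k. bern_poly k v) (\<lambda>j. bern_poly j u)"
  unfolding M_sum_def Gs_def by (rule sum.cong) (simp_all add: mult_ac)

theorem theorem1p1:
  fixes n :: nat and x y z :: complex
  assumes "n > 0" and "x + y + z = 1"
  shows "(\<forall>r s t :: complex. r + s + t = of_nat n - 1 \<longrightarrow>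
            (\<Sum>k\<le>n. (-1) ^ k * (r gchoose k) * (s gchoose (n - k)) * bern_poly k x * eul_poly (n - k) z)
            - (-1) ^ n * (\<Sum>k\<le>n. (-1) ^ k * (r gchoose k) * (t gchoose (n - k)) * bern_poly k y * eul_poly (n - k) z)
            = r / 2 * (\<Sum>l\<le>n - 1. (-1) ^ l * (s gchoose l) * (t gchoose (n - 1 - l))
                                     * eul_poly l y * eul_poly (n - 1 - l) x))
       \<and> (\<forall>r s t :: complex. r + s + t = of_nat n \<longrightarrow>
            r * M_sum n s t x y + s * M_sum n t r y z + t * M_sum n r s z x = 0)"
proof (intro conjI allI impI)
  have z: "z = 1 - x - y" using assms(2) by (simp add: algebra_simps)
  obtain m where m: "n = Suc m" using assms(1) by (cases n) auto
  fix r s t :: complex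
  {
    assume h: "r + s + t = of_nat n - 1"
    have "r + s + t = of_nat m" using h m by simp
    then have "Tg (Suc m) r s t x y = 0" by (rule part1)
    then have "Tg n r s t x y = 0" using m by simp
    then show "(\<Sum>k\<le>n. (-1) ^ k * (r gchoose k) * (s gchoose (n - k)) * bern_poly k x * eul_poly (n - k) z)
            - (-1) ^ n * (\<Sum>k\<le>n. (-1) ^ k * (r gchoose k) * (t gchoose (n - k)) * bern_poly k y * eul_poly (n - k) z)
            = r / 2 * (\<Sum>l\<le>n - 1. (-1) ^ l * (s gchoose l) * (t gchoose (n - 1 - l))
                                     * eul_poly l y * eul_poly (n - 1 - l) x)"
      unfolding Tg_def Gs_def z by (simp add: algebra_simps)
  }
  {
    assume h: "r + s + t = of_nat n"
    then have "Sg n r s t x y = 0" by (rule part2)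
    then show "r * M_sum n s t x y + s * M_sum n t r y z + t * M_sum n r s z x = 0"
      unfolding M_Gs z by (simp add: Sg_def)
  }
qed

end
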